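(* With $f(n)$ the number of partitions of $n$ having a fixed hook (and $f(0)=0$), $$\sum_{n\ge0} f(n)q^n=\sum_{T=0}^\infty \frac{q^{(T+1)^2}}{(q;q)_T\,(q^{T+2};q)_\infty}=\sum_{T=0}^\infty \frac{q^{(T+1)^2}(1-q^{T+1})}{(q;q)_\infty}$$ as formal power series in $q$.
   Context: A partition $\lambda=(\lambda_1\ge\cdots\ge\lambda_t>0)$ of $n$ has first-column hook lengths $h_{i,1}(\lambda)=\lambda_i+(t-i)$, $1\le i\le t$. $\lambda$ has a fixed hook if $h_{i,1}(\lambda)=i$ for some $i$. Notation: $(a;q)_\infty=\prod_{j\ge0}(1-aq^j)$, $(a;q)_n=\prod_{j=0}^{n-1}(1-aq^j)$. *)

theory Defs
  imports "HOL-Computational_Algebra.Formal_Power_Series"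
begin

definition is_partition :: "nat \<Rightarrow> nat list \<Rightarrow> bool" where
  "is_partition n lam \<longleftrightarrow> sorted_wrt (\<ge>) lam \<and> (\<forall>x\<in>set lam. 0 < x) \<and> sum_list lam = n"

text \<open>First-column hook length h_{i,1} = lambda_i + (t - i) for 1 <= i <= t.\<close>
definition hook1 :: "nat list \<Rightarrow> nat \<Rightarrow> nat" where
  "hook1 lam i = lam ! (i - 1) + (length lam - i)"

definition has_fixed_hook :: "nat list \<Rightarrow> bool" where
  "has_fixed_hook lam \<longleftrightarrow> (\<exists>i\<in>{1..length lam}. hook1 lam i = i)"

definition f_fixed :: "nat \<Rightarrow> nat" where
  "f_fixed n = card {lam. is_partition n lam \<and> has_fixed_hook lam}"

definition qpoch :: "rat fps \<Rightarrow> nat \<Rightarrow> rat fps" where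
  "qpoch a n = (\<Prod>j<n. 1 - a * fps_X ^ j)"

definition qpoch_inf :: "rat fps \<Rightarrow> rat fps" where
  "qpoch_inf a = lim (\<lambda>n. qpoch a n)"

end

theory Submission
  imports Defs
begin
unbundle fps_syntax




definition eqn :: "nat \<Rightarrow> rat fps \<Rightarrow> rat fps \<Rightarrow> bool" where
  "eqn n a b \<longleftrightarrow> (\<forall>i\<le>n. a $ i = b $ i)"

lemma eqn_refl[simp]: "eqn n a a" by (simp add: eqn_def)
lemma eqn_sym: "eqn n a b \<Longrightarrow> eqn n b a" by (simp add: eqn_def)
lemma eqn_trans: "eqn n a b \<Longrightarrow> eqn n b c \<Longrightarrow> eqn n a c" by (simp add: eqn_def)
lemma eqn_add: "eqn n a b \<Longrightarrow> eqn n c d \<Longrightarrow> eqn n (a + c) (b + d)" by (simp add: eqn_def)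
lemma eqn_diff: "eqn n a b \<Longrightarrow> eqn n c d \<Longrightarrow> eqn n (a - c) (b - d)" by (simp add: eqn_def)
lemma eqn_mult_right: "eqn n a b \<Longrightarrow> eqn n (a * c) (b * c)"
  unfolding eqn_def fps_mult_nth by (auto intro!: sum.cong)
lemma eqn_mult_left: "eqn n a b \<Longrightarrow> eqn n (c * a) (c * b)"
  using eqn_mult_right[of n a b c] by (simp add: mult.commute)
lemma eqn_all: "(\<And>n. eqn n a b) \<Longrightarrow> a = b"
  unfolding eqn_def fps_eq_iff by blast
lemma eqn_sum: "(\<And>x. x \<in> A \<Longrightarrow> eqn n (f x) (g x)) \<Longrightarrow> eqn n (sum f A) (sum g A)"
  unfolding eqn_def fps_sum_nth by auto

lemma eqn_Xpow_zero: "n < r \<Longrightarrow> eqn n (fps_X ^ r * a) 0"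
  unfolding eqn_def by (simp add: fps_X_power_mult_nth)

lemma qpoch_Suc: "qpoch a (Suc n) = qpoch a n * (1 - a * fps_X ^ n)"
  by (simp add: qpoch_def)

lemma qpoch_0[simp]: "qpoch a 0 = 1"
  by (simp add: qpoch_def)

lemma qpochX_Suc: "qpoch fps_X (Suc n) = qpoch fps_X n * (1 - fps_X ^ Suc n)"
  by (simp add: qpoch_Suc)

lemma qpoch_nth0: "a $ 0 = 0 \<Longrightarrow> qpoch a n $ 0 = 1"
  by (induction n) (auto simp: qpoch_Suc)

lemma qpochXs_nth0: "0 < s \<Longrightarrow> qpoch (fps_X ^ s) n $ 0 = 1"
  by (rule qpoch_nth0) simp

lemma qpochX_nth0: "qpoch fps_X n $ 0 = 1"
  by (rule qpoch_nth0) simp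

lemma eqn_one_minus: "n < r \<Longrightarrow> eqn n (p * (1 - fps_X ^ r)) p"
proof -
  assume "n < r"
  then have "eqn n (fps_X ^ r * p) 0" by (rule eqn_Xpow_zero)
  then show ?thesis unfolding eqn_def by (simp add: algebra_simps)
qed

lemma qpoch_stable:
  assumes "0 < s" "n < N"
  shows "eqn n (qpoch (fps_X ^ s) N) (qpoch (fps_X ^ s) (Suc n))"
  using assms(2)
proof (induction N)
  case 0 then show ?case by simp
next
  case (Suc N)
  show ?case
  proof (cases "N = n")
    case True then show ?thesis by simp
  next
    case False
    with Suc have "n < N" by simp
    have "eqn n (qpoch (fps_X ^ s) (Suc N)) (qpoch (fps_X ^ s) N)"
      unfolding qpoch_Suc power_add[symmetric] using \<open>n < N\<close> assms(1)
      by (intro eqn_one_minus) simp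
    then show ?thesis using Suc.IH[OF \<open>n<N\<close>] by (rule eqn_trans)
  qed
qed

definition Einf :: "nat \<Rightarrow> rat fps" where
  "Einf s = Abs_fps (\<lambda>n. qpoch (fps_X ^ s) (Suc n) $ n)"

lemma qpoch_tendsto:
  assumes "0 < s"
  shows "(\<lambda>N. qpoch (fps_X ^ s) N) \<longlonglongrightarrow> Einf s"
proof (rule tendsto_fpsI)
  fix n
  show "eventually (\<lambda>N. qpoch (fps_X ^ s) N $ n = Einf s $ n) sequentially"
    unfolding eventually_sequentially
    using qpoch_stable[OF assms] by (auto simp: Einf_def eqn_def intro!: exI[of _ "Suc n"])
qed

lemma qpoch_inf_eq: "0 < s \<Longrightarrow> qpoch_inf (fps_X ^ s) = Einf s"
  unfolding qpoch_inf_def by (rule limI, rule qpoch_tendsto)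

lemma Einf_eqn: "0 < s \<Longrightarrow> n < N \<Longrightarrow> eqn n (Einf s) (qpoch (fps_X ^ s) N)"
  unfolding eqn_def
proof (intro allI impI)
  fix i assume "0 < s" "n < N" "i \<le> n"
  then have "eqn i (qpoch (fps_X ^ s) N) (qpoch (fps_X ^ s) (Suc i))"
    by (intro qpoch_stable) auto
  then show "Einf s $ i = qpoch (fps_X ^ s) N $ i"
    unfolding eqn_def Einf_def by simp
qed

lemma Einf_nth0: "0 < s \<Longrightarrow> Einf s $ 0 = 1"
  by (simp add: Einf_def qpochXs_nth0)

definition G :: "nat \<Rightarrow> nat \<Rightarrow> rat fps" where
  "G s K = (\<Sum>k<K. fps_X ^ (s * k) * inverse (qpoch fps_X k))"

lemma G_Suc: "G s (Suc K) = G s K + fps_X ^ (s * K) * inverse (qpoch fps_X K)"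
  by (simp add: G_def)

lemma G_0: "G s 0 = 0" by (simp add: G_def)

lemma inv_step: "(1 - fps_X ^ Suc K) * inverse (qpoch fps_X (Suc K)) = inverse (qpoch fps_X K)"
proof -
  define Y :: "rat fps" where "Y = fps_X ^ Suc K"
  have q: "qpoch fps_X (Suc K) = qpoch fps_X K * (1 - Y)"
    unfolding Y_def by (rule qpochX_Suc)
  have h1: "inverse (qpoch fps_X (Suc K)) = inverse (qpoch fps_X K) * inverse (1 - Y)"
    by (simp only: q fps_inverse_mult)
  have h2: "(1 - Y) * inverse (1 - Y) = 1"
    by (rule inverse_mult_eq_1') (simp add: Y_def)
  show ?thesis unfolding Y_def[symmetric] h1
    by (metis h2 mult.left_commute mult.right_neutral)
qed

lemma G_diff: "G s (Suc K) - G (Suc s) (Suc K) = fps_X ^ s * G s K"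
proof (induction K)
  case 0 then show ?case by (simp add: G_def)
next
  case (Suc K)
  have e1: "fps_X ^ (Suc s * Suc K) = fps_X ^ (s * Suc K) * (fps_X ^ Suc K :: rat fps)"
    by (simp add: power_add[symmetric] algebra_simps)
  have e2: "fps_X ^ (s * Suc K) = fps_X ^ s * (fps_X ^ (s * K) :: rat fps)"
    by (simp add: power_add[symmetric] algebra_simps)
  have "G s (Suc (Suc K)) - G (Suc s) (Suc (Suc K)) =
     (G s (Suc K) - G (Suc s) (Suc K)) + fps_X ^ (s * Suc K) * ((1 - fps_X ^ Suc K) * inverse (qpoch fps_X (Suc K)))"
    by (simp only: G_Suc e1) (simp add: algebra_simps)
  also have "\<dots> = fps_X ^ s * G s K + fps_X ^ (s * Suc K) * inverse (qpoch fps_X K)"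
    by (simp only: Suc.IH inv_step)
  also have "\<dots> = fps_X ^ s * G s (Suc K)"
    by (simp only: G_Suc e2) (simp add: algebra_simps)
  finally show ?case .
qed

lemma G_func: "n < s * Suc K \<Longrightarrow> eqn n (G s (Suc K) * (1 - fps_X ^ s)) (G (Suc s) (Suc K))"
proof -
  assume n: "n < s * Suc K"
  have e2: "fps_X ^ s * fps_X ^ (s * K) = (fps_X ^ (s * Suc K) :: rat fps)"
    by (simp add: power_add[symmetric])
  have "G s (Suc K) * (1 - fps_X ^ s) = G s (Suc K) - fps_X ^ s * G s (Suc K)"
    by (simp add: algebra_simps)
  also have "\<dots> = G (Suc s) (Suc K) + fps_X ^ s * G s K - fps_X ^ s * G s (Suc K)"
    using G_diff[of s K] by (simp add: algebra_simps)
  also have "\<dots> = G (Suc s) (Suc K) - fps_X ^ s * fps_X ^ (s * K) * inverse (qpoch fps_X K)"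
    by (simp only: G_Suc[of s K]) (simp add: algebra_simps)
  also have "\<dots> = G (Suc s) (Suc K) - fps_X ^ (s * Suc K) * inverse (qpoch fps_X K)"
    by (simp only: e2)
  finally have eq: "G s (Suc K) * (1 - fps_X ^ s) = G (Suc s) (Suc K) - fps_X ^ (s * Suc K) * inverse (qpoch fps_X K)" .
  have "eqn n (G (Suc s) (Suc K) - fps_X ^ (s * Suc K) * inverse (qpoch fps_X K)) (G (Suc s) (Suc K) - 0)"
    by (intro eqn_diff eqn_refl eqn_Xpow_zero n)
  then show ?thesis by (simp add: eq)
qed

lemma G_iter:
  assumes "0 < s" "n < Suc K"
  shows "eqn n (G s (Suc K) * qpoch (fps_X ^ s) N) (G (s + N) (Suc K))"
proof (induction N)
  case 0 then show ?case by simp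
next
  case (Suc N)
  have eq: "G s (Suc K) * qpoch (fps_X ^ s) (Suc N) = (G s (Suc K) * qpoch (fps_X ^ s) N) * (1 - fps_X ^ (s + N))"
    by (simp add: qpoch_Suc power_add algebra_simps)
  have A: "eqn n ((G s (Suc K) * qpoch (fps_X ^ s) N) * (1 - fps_X ^ (s + N))) (G (s + N) (Suc K) * (1 - fps_X ^ (s + N)))"
    by (rule eqn_mult_right[OF Suc.IH])
  have "n < (s + N) * Suc K"
  proof -
    have "Suc K \<le> (s + N) * Suc K" using mult_le_mono1[of 1 "s + N" "Suc K"] assms(1) by simp
    then show ?thesis using assms(2) by linarith
  qed
  then have B: "eqn n (G (s + N) (Suc K) * (1 - fps_X ^ (s + N))) (G (Suc (s + N)) (Suc K))"
    by (rule G_func)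
  show ?case unfolding eq using eqn_trans[OF A B] by simp
qed

lemma G_one: "n < r \<Longrightarrow> eqn n (G r (Suc K)) 1"
proof (induction K)
  case 0 then show ?case by (simp add: G_def)
next
  case (Suc K)
  have "n < r * Suc K" using Suc.prems by (metis le_add1 less_le_trans mult_Suc_right)
  then have "eqn n (G r (Suc K) + fps_X ^ (r * Suc K) * inverse (qpoch fps_X (Suc K))) (1 + 0)"
    by (intro eqn_add Suc.IH Suc.prems eqn_Xpow_zero)
  then show ?case by (simp add: G_Suc[of r "Suc K"])
qed

lemma Euler:
  assumes "0 < s"
  shows "eqn n (inverse (Einf s)) (G s (Suc n))"
proof -
  have "eqn n (G s (Suc n) * Einf s) (G s (Suc n) * qpoch (fps_X ^ s) (Suc n))"
    by (intro eqn_mult_left Einf_eqn assms) simp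
  moreover have "eqn n (G s (Suc n) * qpoch (fps_X ^ s) (Suc n)) (G (s + Suc n) (Suc n))"
    by (intro G_iter assms) simp
  moreover have "eqn n (G (s + Suc n) (Suc n)) 1"
    by (intro G_one) simp
  ultimately have h: "eqn n (G s (Suc n) * Einf s) 1" by (blast intro: eqn_trans)
  have inv: "inverse (Einf s) * Einf s = 1"
    by (rule inverse_mult_eq_1) (simp add: Einf_nth0 assms)
  have "eqn n (inverse (Einf s) * (G s (Suc n) * Einf s)) (inverse (Einf s) * 1)"
    by (rule eqn_mult_left[OF h])
  moreover have "inverse (Einf s) * (G s (Suc n) * Einf s) = G s (Suc n)"
    using inv by (simp add: algebra_simps)
  ultimately show ?thesis by (simp add: eqn_sym)
qed





definition PN :: "nat \<Rightarrow> nat \<Rightarrow> nat list set" where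
  "PN N j = {xs. length xs = N \<and> sorted xs \<and> sum_list xs = j}"

definition Bx :: "nat \<Rightarrow> nat \<Rightarrow> nat \<Rightarrow> nat list set" where
  "Bx k m j = {xs. length xs = k \<and> sorted xs \<and> set xs \<subseteq> {1..m} \<and> sum_list xs = j}"

lemma sum_list_map_Suc: "sum_list (map Suc ys) = sum_list ys + length ys"
  by (induction ys) auto

lemma map_Suc_pred: "(\<forall>x\<in>set xs. 0 < x) \<Longrightarrow> map Suc (map (\<lambda>x. x - 1) xs) = xs"
  by (induction xs) auto

lemma sorted_map_Suc: "sorted (map Suc xs) = sorted xs"
  by (simp add: sorted_map)

lemma finite_PN: "finite (PN N j)"
proof -
  have "PN N j \<subseteq> {xs. set xs \<subseteq> {0..j} \<and> length xs = N}"
    unfolding PN_def using member_le_sum_list by fastforce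
  then show ?thesis by (rule finite_subset) (rule finite_lists_length_eq, simp)
qed

lemma finite_Bx: "finite (Bx k m j)"
proof -
  have "Bx k m j \<subseteq> {xs. set xs \<subseteq> {1..m} \<and> length xs = k}"
    unfolding Bx_def by auto
  then show ?thesis by (rule finite_subset) (rule finite_lists_length_eq, simp)
qed

lemma PN_0: "PN 0 j = (if j = 0 then {[]} else {})"
  by (auto simp: PN_def)

lemma PN_Suc_split:
  "PN (Suc N) j = Cons 0 ` PN N j \<union> map Suc ` {ys. length ys = Suc N \<and> sorted ys \<and> sum_list ys + Suc N = j}"
proof (intro equalityI subsetI)
  fix xs assume xs: "xs \<in> PN (Suc N) j"
  then obtain x ys where xys: "xs = x # ys" unfolding PN_def by (cases xs) auto
  show "xs \<in> Cons 0 ` PN N j \<union> map Suc ` {ys. length ys = Suc N \<and> sorted ys \<and> sum_list ys + Suc N = j}"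
  proof (cases "x = 0")
    case True
    then have "ys \<in> PN N j" using xs xys by (auto simp: PN_def)
    then show ?thesis using xys True by auto
  next
    case False
    have "sorted (x # ys)" using xs xys by (simp add: PN_def)
    then have "\<forall>y\<in>set ys. x \<le> y" by simp
    then have pos: "\<forall>y\<in>set xs. 0 < y" using False xys by auto
    define zs where "zs = map (\<lambda>x. x - 1) xs"
    have xs_eq: "xs = map Suc zs" unfolding zs_def using map_Suc_pred[OF pos] by simp
    have "length zs = Suc N" using xs by (simp add: zs_def PN_def)
    moreover have "sorted zs" using xs xs_eq sorted_map_Suc[of zs] by (simp add: PN_def)
    moreover have "sum_list zs + Suc N = j"
      using xs xs_eq sum_list_map_Suc[of zs] \<open>length zs = Suc N\<close> by (simp add: PN_def)
    ultimately show ?thesis using xs_eq by blast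
  qed
next
  fix xs assume "xs \<in> Cons 0 ` PN N j \<union> map Suc ` {ys. length ys = Suc N \<and> sorted ys \<and> sum_list ys + Suc N = j}"
  then show "xs \<in> PN (Suc N) j"
    by (auto simp: PN_def sorted_map_Suc sum_list_map_Suc)
qed

lemma card_PN_Suc:
  "card (PN (Suc N) j) = card (PN N j) + (if Suc N \<le> j then card (PN (Suc N) (j - Suc N)) else 0)"
proof -
  define B where "B = {ys. length ys = Suc N \<and> sorted ys \<and> sum_list ys + Suc N = j}"
  have B: "B = (if Suc N \<le> j then PN (Suc N) (j - Suc N) else {})"
    unfolding B_def PN_def by auto
  have fB: "finite B" by (simp add: B finite_PN)
  have "card (PN (Suc N) j) = card (Cons 0 ` PN N j \<union> map Suc ` B)"
    by (simp add: PN_Suc_split B_def)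
  also have "\<dots> = card (Cons 0 ` PN N j) + card (map Suc ` B)"
    by (rule card_Un_disjoint) (auto simp: finite_PN fB)
  also have "\<dots> = card (PN N j) + card B"
    by (simp add: card_image inj_on_def inj_map_eq_map)
  finally show ?thesis by (simp add: B)
qed

definition Pf :: "nat \<Rightarrow> rat fps" where
  "Pf N = Abs_fps (\<lambda>j. of_nat (card (PN N j)))"

lemma Pf_0: "Pf 0 = 1"
  by (simp add: Pf_def PN_0 fps_eq_iff)

lemma Pf_Suc: "Pf (Suc N) = Pf N + fps_X ^ Suc N * Pf (Suc N)"
proof (rule fps_ext)
  fix n
  have b: "(fps_X ^ Suc N * Pf (Suc N)) $ n = (if Suc N \<le> n then of_nat (card (PN (Suc N) (n - Suc N))) else 0)"
    by (simp only: fps_X_power_mult_nth) (auto simp: Pf_def)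
  have c: "Pf (Suc N) $ n = of_nat (card (PN (Suc N) n))" "Pf N $ n = of_nat (card (PN N n))"
    by (simp_all add: Pf_def)
  show "Pf (Suc N) $ n = (Pf N + fps_X ^ Suc N * Pf (Suc N)) $ n"
    unfolding fps_add_nth b c card_PN_Suc[of N n] of_nat_add by (cases "Suc N \<le> n") simp_all
qed

lemma Pf_qpoch: "Pf N * qpoch fps_X N = 1"
proof (induction N)
  case 0 then show ?case by (simp add: Pf_0)
next
  case (Suc N)
  have "Pf (Suc N) * (1 - fps_X ^ Suc N) = Pf N"
    using Pf_Suc[of N] by (simp add: algebra_simps)
  moreover have "Pf (Suc N) * qpoch fps_X (Suc N) = (Pf (Suc N) * (1 - fps_X ^ Suc N)) * qpoch fps_X N"
    by (simp only: qpochX_Suc mult_ac)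
  ultimately show ?case using Suc.IH by simp
qed

lemma Bx_0: "Bx 0 m j = (if j = 0 then {[]} else {})"
  by (auto simp: Bx_def)

lemma Bx_Suc_0: "Bx (Suc k) 0 j = {}"
  by (auto simp: Bx_def length_Suc_conv)

lemma Bx_Suc_split:
  "Bx (Suc k) (Suc m) j = Cons 1 ` {ys. length ys = k \<and> sorted ys \<and> set ys \<subseteq> {1..Suc m} \<and> Suc (sum_list ys) = j}
     \<union> map Suc ` {ys. length ys = Suc k \<and> sorted ys \<and> set ys \<subseteq> {1..m} \<and> sum_list ys + Suc k = j}"
proof (intro equalityI subsetI)
  fix xs assume xs: "xs \<in> Bx (Suc k) (Suc m) j"
  then obtain x ys where xys: "xs = x # ys" unfolding Bx_def by (cases xs) auto
  have x1: "1 \<le> x" using xs xys by (auto simp: Bx_def)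
  show "xs \<in> Cons 1 ` {ys. length ys = k \<and> sorted ys \<and> set ys \<subseteq> {1..Suc m} \<and> Suc (sum_list ys) = j}
     \<union> map Suc ` {ys. length ys = Suc k \<and> sorted ys \<and> set ys \<subseteq> {1..m} \<and> sum_list ys + Suc k = j}"
  proof (cases "x = 1")
    case True
    then show ?thesis using xs xys by (auto simp: Bx_def)
  next
    case False
    have "sorted (x # ys)" using xs xys by (simp add: Bx_def)
    then have "\<forall>y\<in>set ys. x \<le> y" by simp
    then have pos: "\<forall>y\<in>set xs. 2 \<le> y" using False x1 xys by auto
    then have pos': "\<forall>y\<in>set xs. 0 < y" by auto
    define zs where "zs = map (\<lambda>x. x - 1) xs"
    have xs_eq: "xs = map Suc zs" unfolding zs_def using map_Suc_pred[OF pos'] by simp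
    have "length zs = Suc k" using xs by (simp add: zs_def Bx_def)
    moreover have "sorted zs" using xs xs_eq sorted_map_Suc[of zs] by (simp add: Bx_def)
    moreover have "set zs \<subseteq> {1..m}"
      using xs pos unfolding zs_def Bx_def by force
    moreover have "sum_list zs + Suc k = j"
      using xs xs_eq sum_list_map_Suc[of zs] \<open>length zs = Suc k\<close> by (simp add: Bx_def)
    ultimately show ?thesis using xs_eq by blast
  qed
next
  fix xs assume "xs \<in> Cons 1 ` {ys. length ys = k \<and> sorted ys \<and> set ys \<subseteq> {1..Suc m} \<and> Suc (sum_list ys) = j}
     \<union> map Suc ` {ys. length ys = Suc k \<and> sorted ys \<and> set ys \<subseteq> {1..m} \<and> sum_list ys + Suc k = j}"
  then show "xs \<in> Bx (Suc k) (Suc m) j"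
  proof (elim UnE imageE)
    fix ys assume xs: "xs = 1 # ys" and ys: "ys \<in> {ys. length ys = k \<and> sorted ys \<and> set ys \<subseteq> {1..Suc m} \<and> Suc (sum_list ys) = j}"
    have "\<forall>y\<in>set ys. 1 \<le> y" using ys by auto
    then show ?thesis using xs ys unfolding Bx_def by auto
  next
    fix ys assume xs: "xs = map Suc ys" and ys: "ys \<in> {ys. length ys = Suc k \<and> sorted ys \<and> set ys \<subseteq> {1..m} \<and> sum_list ys + Suc k = j}"
    have "set xs \<subseteq> {1..Suc m}" using ys unfolding xs by auto
    moreover have "sorted xs" using ys unfolding xs by (simp add: sorted_map_Suc)
    moreover have "sum_list xs = j" using ys unfolding xs by (simp add: sum_list_map_Suc)
    ultimately show ?thesis using ys xs unfolding Bx_def by simp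
  qed
qed

lemma card_Bx_Suc:
  "card (Bx (Suc k) (Suc m) j) = (if 1 \<le> j then card (Bx k (Suc m) (j - 1)) else 0)
      + (if Suc k \<le> j then card (Bx (Suc k) m (j - Suc k)) else 0)"
proof -
  define A where "A = {ys. length ys = k \<and> sorted ys \<and> set ys \<subseteq> {1..Suc m} \<and> Suc (sum_list ys) = j}"
  define B where "B = {ys. length ys = Suc k \<and> sorted ys \<and> set ys \<subseteq> {1..m} \<and> sum_list ys + Suc k = j}"
  have A: "A = (if 1 \<le> j then Bx k (Suc m) (j - 1) else {})"
    unfolding A_def Bx_def by auto
  have B: "B = (if Suc k \<le> j then Bx (Suc k) m (j - Suc k) else {})"
    unfolding B_def Bx_def by auto
  have fA: "finite A" by (simp add: A finite_Bx)
  have fB: "finite B" by (simp add: B finite_Bx)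
  have dj: "Cons 1 ` A \<inter> map Suc ` B = {}" unfolding B_def by auto
  have "card (Bx (Suc k) (Suc m) j) = card (Cons 1 ` A \<union> map Suc ` B)"
    by (simp add: Bx_Suc_split A_def B_def)
  also have "\<dots> = card (Cons 1 ` A) + card (map Suc ` B)"
    by (rule card_Un_disjoint[OF finite_imageI[OF fA] finite_imageI[OF fB] dj])
  also have "\<dots> = card A + card B"
    by (simp add: card_image inj_on_def inj_map_eq_map)
  finally show ?thesis by (simp add: A B)
qed

definition Bf :: "nat \<Rightarrow> nat \<Rightarrow> rat fps" where
  "Bf k m = Abs_fps (\<lambda>j. of_nat (card (Bx k m j)))"

lemma Bf_0: "Bf 0 m = 1"
  by (simp add: Bf_def Bx_0 fps_eq_iff)

lemma Bf_Suc_0: "Bf (Suc k) 0 = 0"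
  by (simp add: Bf_def Bx_Suc_0 fps_eq_iff)

lemma Bf_Suc: "Bf (Suc k) (Suc m) = fps_X ^ 1 * Bf k (Suc m) + fps_X ^ Suc k * Bf (Suc k) m"
proof (rule fps_ext)
  fix n
  have a: "(fps_X ^ 1 * Bf k (Suc m)) $ n = (if 1 \<le> n then of_nat (card (Bx k (Suc m) (n - 1))) else 0)"
    by (simp only: fps_X_power_mult_nth) (simp add: Bf_def not_less)
  have b: "(fps_X ^ Suc k * Bf (Suc k) m) $ n = (if Suc k \<le> n then of_nat (card (Bx (Suc k) m (n - Suc k))) else 0)"
    by (simp only: fps_X_power_mult_nth) (auto simp: Bf_def)
  have c: "Bf (Suc k) (Suc m) $ n = of_nat (card (Bx (Suc k) (Suc m) n))"
    by (simp add: Bf_def)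
  show "Bf (Suc k) (Suc m) $ n = (fps_X ^ 1 * Bf k (Suc m) + fps_X ^ Suc k * Bf (Suc k) m) $ n"
    unfolding fps_add_nth a b c card_Bx_Suc of_nat_add by (cases "1 \<le> n"; cases "Suc k \<le> n") simp_all
qed





lemma alg_step:
  fixes a b qk qm Q X Xk Y Z :: "'a::comm_ring_1"
  assumes h1: "a * qk * (qm * (1 - Z)) = Xk * Q"
    and h2: "b * (qk * (1 - Y)) * qm = Y * Q"
    and h3: "Y = X * Xk"
  shows "(X * a + Y * b) * (qk * (1 - Y)) * (qm * (1 - Z)) = Y * (Q * (1 - Y * Z))"
proof -
  have "(X * a + Y * b) * (qk * (1 - Y)) * (qm * (1 - Z))
      = X * (1 - Y) * (a * qk * (qm * (1 - Z))) + Y * (1 - Z) * (b * (qk * (1 - Y)) * qm)"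
    by (simp add: algebra_simps)
  also have "\<dots> = X * (1 - Y) * (Xk * Q) + Y * (1 - Z) * (Y * Q)"
    by (simp only: h1 h2)
  also have "\<dots> = Y * (Q * (1 - Y * Z))"
    by (simp add: h3 algebra_simps)
  finally show ?thesis .
qed

lemma alg_base:
  fixes a qk X Xk Y :: "'a::comm_ring_1"
  assumes h1: "a * qk * 1 = Xk * qk" and h3: "Y = X * Xk"
  shows "(X * a) * (qk * (1 - Y)) * 1 = Y * (qk * (1 - Y))"
proof -
  have "(X * a) * (qk * (1 - Y)) * 1 = X * (1 - Y) * (a * qk * 1)" by (simp add: algebra_simps)
  also have "\<dots> = X * (1 - Y) * (Xk * qk)" by (simp only: h1)
  also have "\<dots> = Y * (qk * (1 - Y))" by (simp add: h3 algebra_simps)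
  finally show ?thesis .
qed

lemma qbinom: "Bf k (Suc m) * qpoch fps_X k * qpoch fps_X m = fps_X ^ k * qpoch fps_X (m + k)"
proof (induction k arbitrary: m)
  case 0
  then show ?case by (simp add: Bf_0)
next
  case (Suc k)
  have IHk: "\<And>m'. Bf k (Suc m') * qpoch fps_X k * qpoch fps_X m' = fps_X ^ k * qpoch fps_X (m' + k)"
    by (rule Suc.IH)
  show ?case
  proof (induction m)
    case 0
    have r: "Bf (Suc k) (Suc 0) = fps_X ^ 1 * Bf k (Suc 0)"
      using Bf_Suc[of k 0] by (simp add: Bf_Suc_0)
    have ih: "Bf k (Suc 0) * qpoch fps_X k * 1 = fps_X ^ k * qpoch fps_X k"
      using IHk[of 0] by simp
    have "(fps_X ^ 1 * Bf k (Suc 0)) * (qpoch fps_X k * (1 - fps_X ^ Suc k)) * 1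
        = fps_X ^ Suc k * (qpoch fps_X k * (1 - fps_X ^ Suc k))"
      by (rule alg_base[OF ih]) simp
    then show ?case by (simp only: r qpochX_Suc qpoch_0 add_0)
  next
    case (Suc m)
    have r: "Bf (Suc k) (Suc (Suc m)) = fps_X ^ 1 * Bf k (Suc (Suc m)) + fps_X ^ Suc k * Bf (Suc k) (Suc m)"
      by (rule Bf_Suc)
    have h1: "Bf k (Suc (Suc m)) * qpoch fps_X k * (qpoch fps_X m * (1 - fps_X ^ Suc m)) = fps_X ^ k * qpoch fps_X (m + Suc k)"
      using IHk[of "Suc m"] by (simp only: qpochX_Suc add_Suc_shift add_Suc)
    have h2: "Bf (Suc k) (Suc m) * (qpoch fps_X k * (1 - fps_X ^ Suc k)) * qpoch fps_X m = fps_X ^ Suc k * qpoch fps_X (m + Suc k)"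
      using Suc.IH by (simp only: qpochX_Suc)
    have e: "fps_X ^ Suc (m + Suc k) = fps_X ^ Suc k * (fps_X ^ Suc m :: rat fps)"
      by (simp add: power_add[symmetric])
    have "(fps_X ^ 1 * Bf k (Suc (Suc m)) + fps_X ^ Suc k * Bf (Suc k) (Suc m)) * (qpoch fps_X k * (1 - fps_X ^ Suc k))
           * (qpoch fps_X m * (1 - fps_X ^ Suc m))
          = fps_X ^ Suc k * (qpoch fps_X (m + Suc k) * (1 - fps_X ^ Suc k * fps_X ^ Suc m))"
      by (rule alg_step[OF h1 h2]) simp
    moreover have "qpoch fps_X (Suc m + Suc k) = qpoch fps_X (m + Suc k) * (1 - fps_X ^ Suc k * fps_X ^ Suc m)"
      by (simp only: add_Suc qpochX_Suc e)
    ultimately show ?case by (simp only: r qpochX_Suc)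
  qed
qed

lemma coeff_identity:
  "fps_X ^ k * inverse (qpoch fps_X k) * inverse (qpoch fps_X m) = Bf k (Suc m) * Pf (m + k)"
proof -
  define ik where "ik = inverse (qpoch fps_X k)"
  define im where "im = inverse (qpoch fps_X m)"
  have ik: "qpoch fps_X k * ik = 1" unfolding ik_def by (rule inverse_mult_eq_1') (simp add: qpochX_nth0)
  have im: "qpoch fps_X m * im = 1" unfolding im_def by (rule inverse_mult_eq_1') (simp add: qpochX_nth0)
  have P: "Pf (m + k) * qpoch fps_X (m + k) = 1" by (rule Pf_qpoch)
  have "Bf k (Suc m) * qpoch fps_X k * qpoch fps_X m * (ik * im * Pf (m + k)) = fps_X ^ k * qpoch fps_X (m + k) * (ik * im * Pf (m + k))"
    by (simp only: qbinom)
  moreover have "Bf k (Suc m) * qpoch fps_X k * qpoch fps_X m * (ik * im * Pf (m + k)) = Bf k (Suc m) * Pf (m + k) * ((qpoch fps_X k * ik) * (qpoch fps_X m * im))"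
    by (simp only: mult_ac)
  moreover have "fps_X ^ k * qpoch fps_X (m + k) * (ik * im * Pf (m + k)) = fps_X ^ k * ik * im * (Pf (m + k) * qpoch fps_X (m + k))"
    by (simp only: mult_ac)
  ultimately show ?thesis unfolding ik_def[symmetric] im_def[symmetric] using ik im P by simp
qed




definition Q :: "nat \<Rightarrow> nat \<Rightarrow> nat \<Rightarrow> (nat list \<times> nat list) set" where
  "Q m k n = {(L, U). length L = k \<and> sorted L \<and> set L \<subseteq> {1..m} \<and> length U = m + k - 1 \<and> sorted U
      \<and> sum_list L + sum_list U + m * (m + k) = n}"

definition gmap :: "nat \<Rightarrow> nat list \<Rightarrow> nat list \<Rightarrow> nat list" where
  "gmap m L U = rev (map (\<lambda>x. x + m) U) @ m # rev L"

lemma sum_list_plus: "sum_list (map (\<lambda>x. x + m) xs) = sum_list xs + m * length xs"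
  by (induction xs) auto

lemma sum_list_minus: "(\<forall>x\<in>set xs. m \<le> x) \<Longrightarrow> sum_list (map (\<lambda>x. x - m) xs) + m * length xs = sum_list xs"
  by (induction xs) auto

lemma sorted_rev_iff: "sorted (rev xs) = sorted_wrt (\<lambda>x y. y \<le> x) (xs :: nat list)"
  by (simp add: sorted_wrt_rev)

lemma sortedwrt_rev_iff: "sorted_wrt (\<lambda>x y. y \<le> x) (rev xs) = sorted (xs :: nat list)"
  by (simp add: sorted_wrt_rev)

lemma mk_lemma: "1 \<le> (m::nat) \<Longrightarrow> m * (m + k - 1) + m = m * (m + k)"
  by (cases m) auto

lemma gmap_props:
  assumes m: "1 \<le> m" and q: "(L, U) \<in> Q m k n"
  shows "is_partition n (gmap m L U)" "length (gmap m L U) = m + 2 * k"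
    "hook1 (gmap m L U) (m + k) = m + k" "has_fixed_hook (gmap m L U)"
proof -
  have L: "length L = k" "sorted L" "set L \<subseteq> {1..m}" and U: "length U = m + k - 1" "sorted U"
    and s: "sum_list L + sum_list U + m * (m + k) = n" using q by (auto simp: Q_def)
  have len: "length (gmap m L U) = m + 2 * k" using L U m by (simp add: gmap_def)
  then show "length (gmap m L U) = m + 2 * k" .
  have s1: "sorted_wrt (\<lambda>x y. y \<le> x) (rev (map (\<lambda>x. x + m) U))"
    unfolding sortedwrt_rev_iff using U(2) by (simp add: sorted_map)
  have s2: "sorted_wrt (\<lambda>x y. y \<le> x) (m # rev L)"
    using L(2,3) by (auto simp: sortedwrt_rev_iff)
  have s3: "\<forall>x\<in>set (rev (map (\<lambda>x. x + m) U)). \<forall>y\<in>set (m # rev L). y \<le> x"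
    using L(3) by fastforce
  have srt: "sorted_wrt (\<lambda>x y. y \<le> x) (gmap m L U)"
    unfolding gmap_def sorted_wrt_append using s1 s2 s3 by blast
  have pos: "\<forall>x\<in>set (gmap m L U). 0 < x"
    using L(3) m by (fastforce simp: gmap_def)
  have "sum_list (gmap m L U) = sum_list U + m * (m + k - 1) + m + sum_list L"
    by (simp add: gmap_def sum_list_plus U(1) sum_list_rev)
  also have "\<dots> = sum_list L + sum_list U + (m * (m + k - 1) + m)" by simp
  also have "\<dots> = n" using s by (simp only: mk_lemma[OF m])
  finally have sm: "sum_list (gmap m L U) = n" .
  show "is_partition n (gmap m L U)" unfolding is_partition_def using srt pos sm by simp
  have nth: "gmap m L U ! (m + k - 1) = m"
  proof -
    have "length (rev (map (\<lambda>x. x + m) U)) = m + k - 1" using U by simp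
    then show ?thesis unfolding gmap_def by (metis nth_append_length)
  qed
  show hk: "hook1 (gmap m L U) (m + k) = m + k"
    unfolding hook1_def len using nth m by simp
  show "has_fixed_hook (gmap m L U)"
    unfolding has_fixed_hook_def using hk len m by (intro bexI[of _ "m + k"]) auto
qed

lemma hook_unique:
  assumes srt: "sorted_wrt (\<lambda>x y. y \<le> x) lam"
    and i: "1 \<le> i" "i \<le> length lam" and j: "1 \<le> j" "j \<le> length lam"
    and hi: "hook1 lam i = i" and hj: "hook1 lam j = j"
  shows "i = j"
proof (rule ccontr)
  assume "i \<noteq> j"
  then consider "i < j" | "j < i" by linarith
  then show False
  proof cases
    case 1
    have "lam ! (j - 1) \<le> lam ! (i - 1)"
      using sorted_wrt_nth_less[OF srt, of "i - 1" "j - 1"] 1 i j by simp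
    then show False using hi hj 1 i j unfolding hook1_def by linarith
  next
    case 2
    have "lam ! (i - 1) \<le> lam ! (j - 1)"
      using sorted_wrt_nth_less[OF srt, of "j - 1" "i - 1"] 2 i j by simp
    then show False using hi hj 2 i j unfolding hook1_def by linarith
  qed
qed

lemma gmap_inj:
  assumes m: "1 \<le> m" "1 \<le> m'" and q: "(L, U) \<in> Q m k n" and q': "(L', U') \<in> Q m' k' n'"
    and eq: "gmap m L U = gmap m' L' U'"
  shows "m = m' \<and> k = k' \<and> L = L' \<and> U = U'"
proof -
  note g = gmap_props[OF m(1) q] and g' = gmap_props[OF m(2) q']
  have srt: "sorted_wrt (\<lambda>x y. y \<le> x) (gmap m L U)"
    using g(1) by (simp add: is_partition_def)
  have "m + k = m' + k'"
    by (rule hook_unique[OF srt, of "m + k" "m' + k'"]) (use g g' eq m in auto)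
  moreover have "m + 2 * k = m' + 2 * k'" using g(2) g'(2) eq by simp
  ultimately have mk: "m = m'" "k = k'" by linarith+
  have lU: "length (rev (map (\<lambda>x. x + m) U)) = length (rev (map (\<lambda>x. x + m) U'))"
    using q q' mk by (simp add: Q_def)
  have e2: "rev (map (\<lambda>x. x + m) U) @ m # rev L = rev (map (\<lambda>x. x + m) U') @ m # rev L'"
    using eq unfolding gmap_def mk(1)[symmetric] .
  have "rev (map (\<lambda>x. x + m) U) = rev (map (\<lambda>x. x + m) U') \<and> m # rev L = m # rev L'"
    by (rule iffD1[OF append_eq_append_conv[OF disjI1[OF lU]] e2])
  then have "map (\<lambda>x. x + m) U = map (\<lambda>x. x + m) U'" "L = L'" by simp_all
  moreover have "inj (\<lambda>x::nat. x + m)" by (simp add: inj_on_def)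
  ultimately show ?thesis using mk by (simp add: inj_map_eq_map)
qed

lemma gmap_surj:
  assumes lam: "is_partition n lam" "has_fixed_hook lam"
  shows "\<exists>m k L U. 1 \<le> m \<and> (L, U) \<in> Q m k n \<and> lam = gmap m L U"
proof -
  from lam(2) obtain i where i: "1 \<le> i" "i \<le> length lam" "hook1 lam i = i"
    unfolding has_fixed_hook_def by auto
  have srt: "sorted_wrt (\<lambda>x y. y \<le> x) lam" and pos: "\<forall>x\<in>set lam. 0 < x" and sm: "sum_list lam = n"
    using lam(1) by (auto simp: is_partition_def)
  define m where "m = lam ! (i - 1)"
  define k where "k = length lam - i"
  have il: "i - 1 < length lam" using i by simp
  have m1: "1 \<le> m" using pos il unfolding m_def by (simp add: Suc_le_eq)
  have imk: "i = m + k" using i(3) unfolding hook1_def m_def k_def by simp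
  define A where "A = take (i - 1) lam"
  define B where "B = drop i lam"
  have split: "lam = A @ m # B"
    unfolding A_def B_def m_def using id_take_nth_drop[OF il] i(1) by simp
  have Age: "\<forall>x\<in>set A. m \<le> x"
  proof
    fix x assume "x \<in> set A"
    then obtain p where p: "p < length A" "x = A ! p" by (auto simp: in_set_conv_nth)
    then have "p < i - 1" "x = lam ! p" using il by (auto simp: A_def)
    then show "m \<le> x" using sorted_wrt_nth_less[OF srt, of p "i - 1"] il unfolding m_def by simp
  qed
  have Ble: "\<forall>x\<in>set B. x \<le> m \<and> 0 < x"
  proof
    fix x assume "x \<in> set B"
    then obtain p where p: "p < length B" "x = B ! p" by (auto simp: in_set_conv_nth)
    then have "i + p < length lam" "x = lam ! (i + p)" using il by (auto simp: B_def)
    then have "x \<le> m" using sorted_wrt_nth_less[OF srt, of "i - 1" "i + p"] i(1) unfolding m_def by simp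
    moreover have "0 < x" using pos \<open>x \<in> set B\<close> unfolding B_def by (meson in_set_dropD)
    ultimately show "x \<le> m \<and> 0 < x" by simp
  qed
  define U where "U = rev (map (\<lambda>x. x - m) A)"
  define L where "L = rev B"
  have AU: "rev (map (\<lambda>x. x + m) U) = A"
    unfolding U_def using Age by (induction A) auto
  have lam_eq: "lam = gmap m L U" unfolding gmap_def AU L_def using split by simp
  have lenA: "length A = m + k - 1" using il imk by (simp add: A_def)
  have lenB: "length B = k" using i by (simp add: B_def k_def)
  have sA: "sorted_wrt (\<lambda>x y. y \<le> x) A" using srt by (simp add: A_def)
  have sB: "sorted_wrt (\<lambda>x y. y \<le> x) B" using srt by (simp add: B_def)
  have sU: "sorted U"
    unfolding U_def sorted_rev_iff sorted_wrt_map
    by (rule sorted_wrt_mono_rel[OF _ sA]) (use Age in auto)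
  have sL: "sorted L" unfolding L_def sorted_rev_iff by (rule sB)
  have setL: "set L \<subseteq> {1..m}" using Ble unfolding L_def by (auto simp: Suc_le_eq)
  have "sum_list lam = sum_list A + m + sum_list B" using split by simp
  moreover have "sum_list A = sum_list U + m * (m + k - 1)"
    using sum_list_minus[OF Age] lenA unfolding U_def by (simp add: sum_list_rev)
  ultimately have "sum_list L + sum_list U + (m * (m + k - 1) + m) = n"
    using sm unfolding L_def by (simp add: sum_list_rev)
  then have "sum_list L + sum_list U + m * (m + k) = n"
    by (simp only: mk_lemma[OF m1])
  then have "(L, U) \<in> Q m k n"
    unfolding Q_def using lenA lenB sU sL setL by (simp add: U_def L_def)
  then show ?thesis using m1 lam_eq by blast
qed





definition S :: "nat \<Rightarrow> nat list set" where
  "S n = {lam. is_partition n lam \<and> has_fixed_hook lam}"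

definition Sig :: "nat \<Rightarrow> ((nat \<times> nat) \<times> (nat list \<times> nat list)) set" where
  "Sig n = Sigma ({..<Suc n} \<times> {..<Suc n}) (\<lambda>(T, k). Q (Suc T) k n)"

definition gg :: "(nat \<times> nat) \<times> (nat list \<times> nat list) \<Rightarrow> nat list" where
  "gg x = (case x of ((T, k), (L, U)) \<Rightarrow> gmap (Suc T) L U)"

lemma Q_bound: "(L, U) \<in> Q m k n \<Longrightarrow> 1 \<le> m \<Longrightarrow> m \<le> n \<and> k \<le> n \<and> m * (m + k) \<le> n"
proof -
  assume q: "(L, U) \<in> Q m k n" and m: "1 \<le> m"
  then have a: "m * (m + k) \<le> n" by (auto simp: Q_def)
  have "m + k \<le> m * (m + k)" using m by simp
  then show ?thesis using a by linarith
qed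

lemma Q_decomp:
  "Q m k n = (if m * (m + k) \<le> n then
     (\<Union>i\<in>{0..n - m * (m + k)}. Bx k m i \<times> PN (m + k - 1) (n - m * (m + k) - i)) else {})"
  by (auto simp: Q_def Bx_def PN_def)

lemma card_Q:
  "card (Q m k n) = (if m * (m + k) \<le> n then
     (\<Sum>i=0..n - m * (m + k). card (Bx k m i) * card (PN (m + k - 1) (n - m * (m + k) - i))) else 0)"
proof (cases "m * (m + k) \<le> n")
  case True
  have "card (\<Union>i\<in>{0..n - m * (m + k)}. Bx k m i \<times> PN (m + k - 1) (n - m * (m + k) - i))
      = (\<Sum>i=0..n - m * (m + k). card (Bx k m i \<times> PN (m + k - 1) (n - m * (m + k) - i)))"
    apply (rule card_UN_disjoint)
      apply simp
     apply (simp add: finite_Bx finite_PN)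
    apply (auto simp: Bx_def)
    done
  then show ?thesis using True by (simp add: Q_decomp card_cartesian_product)
qed (simp add: Q_decomp)

lemma finite_Q: "finite (Q m k n)"
  by (simp add: Q_decomp finite_Bx finite_PN)

lemma bij_gg: "bij_betw gg (Sig n) (S n)"
proof (rule bij_betw_imageI)
  show "inj_on gg (Sig n)"
  proof (rule inj_onI)
    fix x y assume x: "x \<in> Sig n" and y: "y \<in> Sig n" and e: "gg x = gg y"
    obtain T k L U where xe: "x = ((T, k), (L, U))" by (metis prod.exhaust)
    obtain T' k' L' U' where ye: "y = ((T', k'), (L', U'))" by (metis prod.exhaust)
    have q: "(L, U) \<in> Q (Suc T) k n" using x xe by (simp add: Sig_def)
    have q': "(L', U') \<in> Q (Suc T') k' n" using y ye by (simp add: Sig_def)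
    have "gmap (Suc T) L U = gmap (Suc T') L' U'" using e xe ye by (simp add: gg_def)
    from gmap_inj[OF _ _ q q' this] show "x = y" using xe ye by simp
  qed
  show "gg ` Sig n = S n"
  proof (intro equalityI subsetI)
    fix lam assume "lam \<in> gg ` Sig n"
    then obtain T k L U where q: "(L, U) \<in> Q (Suc T) k n" and lam: "lam = gmap (Suc T) L U"
      by (auto simp: Sig_def gg_def)
    show "lam \<in> S n" unfolding S_def lam using gmap_props[OF _ q] by simp
  next
    fix lam assume "lam \<in> S n"
    then obtain m k L U where m: "1 \<le> m" and q: "(L, U) \<in> Q m k n" and lam: "lam = gmap m L U"
      using gmap_surj unfolding S_def by blast
    have b: "m \<le> n" "k \<le> n" using Q_bound[OF q m] by auto
    have "((m - 1, k), (L, U)) \<in> Sig n" using q b m by (simp add: Sig_def)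
    moreover have "gg ((m - 1, k), (L, U)) = lam" using m lam by (simp add: gg_def)
    ultimately show "lam \<in> gg ` Sig n" by (metis image_eqI)
  qed
qed

lemma card_S: "card (S n) = (\<Sum>T<Suc n. \<Sum>k<Suc n. card (Q (Suc T) k n))"
proof -
  have "card (S n) = card (Sig n)" using bij_gg by (metis bij_betw_same_card)
  also have "\<dots> = (\<Sum>a\<in>{..<Suc n} \<times> {..<Suc n}. card ((\<lambda>(T, k). Q (Suc T) k n) a))"
    unfolding Sig_def by (rule card_SigmaI) (auto simp: finite_Q)
  also have "\<dots> = (\<Sum>(T, k)\<in>{..<Suc n} \<times> {..<Suc n}. card (Q (Suc T) k n))"
    by (rule sum.cong) auto
  also have "\<dots> = (\<Sum>T<Suc n. \<Sum>k<Suc n. card (Q (Suc T) k n))"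
    by (rule sum.cartesian_product[symmetric])
  finally show ?thesis .
qed

lemma f_fixed_eq: "f_fixed n = (\<Sum>T<Suc n. \<Sum>k<Suc n. card (Q (Suc T) k n))"
  using card_S by (simp add: f_fixed_def S_def)





definition tm :: "nat \<Rightarrow> rat fps" where
  "tm T = fps_X ^ ((T + 1)^2) / (qpoch fps_X T * qpoch_inf (fps_X ^ (T + 2)))"

lemma tm_alt: "tm T = fps_X ^ ((T + 1)^2) * (inverse (qpoch fps_X T) * inverse (Einf (T + 2)))"
proof -
  have qi: "qpoch_inf (fps_X ^ (T + 2)) = Einf (T + 2)" by (rule qpoch_inf_eq) simp
  have d0: "(qpoch fps_X T * Einf (T + 2)) $ 0 \<noteq> 0"
    by (simp add: qpochX_nth0 Einf_nth0)
  show ?thesis unfolding tm_def qi fps_divide_unit[OF d0] fps_inverse_mult ..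
qed

lemma exp_eq: "(T + 1)^2 + (T + 2) * k = Suc T * (Suc T + k) + (k::nat)"
  by (simp add: power2_eq_square algebra_simps)

lemma exp_eq_pow: "fps_X ^ ((T + 1)^2 + (T + 2) * k) = (fps_X ^ (Suc T * (Suc T + k)) * fps_X ^ k :: rat fps)"
  by (simp only: exp_eq power_add)

lemma tm_eqn: "eqn n (tm T) (\<Sum>k<Suc n. fps_X ^ (Suc T * (Suc T + k)) * (Bf k (Suc T) * Pf (T + k)))"
proof -
  have "eqn n (tm T) (fps_X ^ ((T + 1)^2) * inverse (qpoch fps_X T) * G (T + 2) (Suc n))"
    unfolding tm_alt mult.assoc by (intro eqn_mult_left Euler) simp
  moreover have "fps_X ^ ((T + 1)^2) * inverse (qpoch fps_X T) * G (T + 2) (Suc n)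
      = (\<Sum>k<Suc n. fps_X ^ (Suc T * (Suc T + k)) * (Bf k (Suc T) * Pf (T + k)))"
    unfolding G_def sum_distrib_left
  proof (rule sum.cong[OF refl])
    fix k
    have "fps_X ^ ((T + 1)^2) * inverse (qpoch fps_X T) * (fps_X ^ ((T + 2) * k) * inverse (qpoch fps_X k))
        = fps_X ^ ((T + 1)^2 + (T + 2) * k) * inverse (qpoch fps_X k) * inverse (qpoch fps_X T)"
      by (simp only: power_add mult_ac)
    also have "\<dots> = fps_X ^ (Suc T * (Suc T + k)) * (fps_X ^ k * inverse (qpoch fps_X k) * inverse (qpoch fps_X T))"
      by (subst exp_eq_pow) (simp only: mult_ac)
    also have "\<dots> = fps_X ^ (Suc T * (Suc T + k)) * (Bf k (Suc T) * Pf (T + k))"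
      by (simp only: coeff_identity)
    finally show "fps_X ^ ((T + 1)^2) * inverse (qpoch fps_X T) * (fps_X ^ ((T + 2) * k) * inverse (qpoch fps_X k))
        = fps_X ^ (Suc T * (Suc T + k)) * (Bf k (Suc T) * Pf (T + k))" .
  qed
  ultimately show ?thesis by simp
qed

lemma piece_nth:
  "(fps_X ^ (Suc T * (Suc T + k)) * (Bf k (Suc T) * Pf (T + k))) $ n = of_nat (card (Q (Suc T) k n))"
proof (cases "Suc T * (Suc T + k) \<le> n")
  case True
  have "(fps_X ^ (Suc T * (Suc T + k)) * (Bf k (Suc T) * Pf (T + k))) $ n
      = (Bf k (Suc T) * Pf (T + k)) $ (n - Suc T * (Suc T + k))"
    by (simp only: fps_X_power_mult_nth) (use True in simp)
  also have "\<dots> = (\<Sum>i=0..n - Suc T * (Suc T + k). of_nat (card (Bx k (Suc T) i)) * of_nat (card (PN (T + k) (n - Suc T * (Suc T + k) - i))))"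
    by (simp add: fps_mult_nth Bf_def Pf_def)
  also have "\<dots> = of_nat (card (Q (Suc T) k n))"
    using True by (simp add: card_Q)
  finally show ?thesis .
next
  case False
  then show ?thesis by (simp only: fps_X_power_mult_nth card_Q) simp
qed

lemma tm_nth: "tm T $ n = of_nat (\<Sum>k<Suc n. card (Q (Suc T) k n))"
proof -
  have "tm T $ n = (\<Sum>k<Suc n. fps_X ^ (Suc T * (Suc T + k)) * (Bf k (Suc T) * Pf (T + k))) $ n"
    using tm_eqn[of n T] unfolding eqn_def by simp
  also have "\<dots> = (\<Sum>k<Suc n. of_nat (card (Q (Suc T) k n)))"
    by (simp only: fps_sum_nth piece_nth)
  finally show ?thesis by simp
qed

lemma tm_zero: "n < (T + 1)^2 \<Longrightarrow> tm T $ n = 0"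
  unfolding tm_alt by (simp add: fps_X_power_mult_nth)

lemma tm_sums: "tm sums Abs_fps (\<lambda>n. of_nat (f_fixed n))"
  unfolding sums_def
proof (rule tendsto_fpsI)
  fix n
  show "eventually (\<lambda>N. (\<Sum>T<N. tm T) $ n = Abs_fps (\<lambda>n. of_nat (f_fixed n)) $ n) sequentially"
    unfolding eventually_sequentially
  proof (intro exI allI impI)
    fix N assume N: "Suc n \<le> N"
    have "(\<Sum>T<N. tm T) $ n = (\<Sum>T<N. tm T $ n)" by (simp add: fps_sum_nth)
    also have "\<dots> = (\<Sum>T<Suc n. tm T $ n)"
    proof (rule sum.mono_neutral_right)
      show "finite {..<N}" by simp
      show "{..<Suc n} \<subseteq> {..<N}" using N by auto
      show "\<forall>i\<in>{..<N} - {..<Suc n}. tm i $ n = 0"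
      proof
        fix i assume "i \<in> {..<N} - {..<Suc n}"
        then have "n < i + 1" by simp
        also have "i + 1 \<le> (i + 1)^2" by (simp add: power2_eq_square)
        finally show "tm i $ n = 0" by (rule tm_zero)
      qed
    qed
    also have "\<dots> = of_nat (f_fixed n)"
      by (simp add: tm_nth f_fixed_eq)
    finally show "(\<Sum>T<N. tm T) $ n = Abs_fps (\<lambda>n. of_nat (f_fixed n)) $ n" by simp
  qed
qed

lemma qpoch_shift: "qpoch (fps_X ^ s) (a + N) = qpoch (fps_X ^ s) a * qpoch (fps_X ^ (s + a)) N"
proof (induction N)
  case 0 then show ?case by simp
next
  case (Suc N)
  have "qpoch (fps_X ^ s) (a + Suc N) = qpoch (fps_X ^ s) (a + N) * (1 - fps_X ^ s * fps_X ^ (a + N))"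
    by (simp add: qpoch_Suc)
  moreover have "qpoch (fps_X ^ (s + a)) (Suc N) = qpoch (fps_X ^ (s + a)) N * (1 - fps_X ^ (s + a) * fps_X ^ N)"
    by (simp add: qpoch_Suc)
  moreover have "fps_X ^ s * fps_X ^ (a + N) = (fps_X ^ (s + a) * fps_X ^ N :: rat fps)"
    by (simp add: power_add[symmetric] add.assoc)
  ultimately show ?case using Suc.IH by (simp add: mult_ac)
qed

lemma Einf_split: "Einf 1 = qpoch fps_X (Suc T) * Einf (T + 2)"
proof (rule eqn_all)
  fix n
  have "eqn n (Einf 1) (qpoch (fps_X ^ 1) (Suc T + Suc n))"
    by (rule Einf_eqn) auto
  moreover have "qpoch (fps_X ^ 1) (Suc T + Suc n) = qpoch fps_X (Suc T) * qpoch (fps_X ^ (T + 2)) (Suc n)"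
    using qpoch_shift[of 1 "Suc T" "Suc n"] by simp
  moreover have "eqn n (qpoch fps_X (Suc T) * qpoch (fps_X ^ (T + 2)) (Suc n)) (qpoch fps_X (Suc T) * Einf (T + 2))"
    by (intro eqn_mult_left eqn_sym[OF Einf_eqn]) auto
  ultimately show "eqn n (Einf 1) (qpoch fps_X (Suc T) * Einf (T + 2))"
    by (metis eqn_trans)
qed

lemma term2_eq: "fps_X ^ ((T + 1)^2) * (1 - fps_X ^ (T + 1)) / qpoch_inf fps_X = tm T"
proof -
  have qi: "qpoch_inf fps_X = Einf 1" using qpoch_inf_eq[of 1] by simp
  define Y :: "rat fps" where "Y = fps_X ^ (T + 1)"
  have E: "Einf 1 = qpoch fps_X T * (1 - Y) * Einf (T + 2)"
    unfolding Einf_split[of T] qpochX_Suc Y_def by simp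
  have d0: "(qpoch fps_X T * (1 - Y) * Einf (T + 2)) $ 0 \<noteq> 0"
    by (simp add: qpochX_nth0 Einf_nth0 Y_def)
  have y: "(1 - Y) * inverse (1 - Y) = 1" by (rule inverse_mult_eq_1') (simp add: Y_def)
  have "fps_X ^ ((T + 1)^2) * (1 - Y) / qpoch_inf fps_X
     = fps_X ^ ((T + 1)^2) * (1 - Y) * (inverse (qpoch fps_X T) * inverse (1 - Y) * inverse (Einf (T + 2)))"
    unfolding qi E fps_divide_unit[OF d0] fps_inverse_mult ..
  also have "\<dots> = fps_X ^ ((T + 1)^2) * (inverse (qpoch fps_X T) * inverse (Einf (T + 2))) * ((1 - Y) * inverse (1 - Y))"
    by (simp only: mult_ac)
  also have "\<dots> = tm T" by (simp only: y tm_alt mult_1_right)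
  finally show ?thesis unfolding Y_def .
qed

theorem mainTheorem2:
  shows "(\<lambda>T. fps_X ^ ((T + 1)^2) / (qpoch fps_X T * qpoch_inf (fps_X ^ (T + 2))))
            sums Abs_fps (\<lambda>n. of_nat (f_fixed n))
       \<and> (\<lambda>T. fps_X ^ ((T + 1)^2) * (1 - fps_X ^ (T + 1)) / qpoch_inf fps_X)
            sums Abs_fps (\<lambda>n. of_nat (f_fixed n))"
proof
  show "(\<lambda>T. fps_X ^ ((T + 1)^2) / (qpoch fps_X T * qpoch_inf (fps_X ^ (T + 2))))
            sums Abs_fps (\<lambda>n. of_nat (f_fixed n))"
    using tm_sums unfolding tm_def .
  show "(\<lambda>T. fps_X ^ ((T + 1)^2) * (1 - fps_X ^ (T + 1)) / qpoch_inf fps_X)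
            sums Abs_fps (\<lambda>n. of_nat (f_fixed n))"
    unfolding term2_eq by (rule tm_sums)
qed



end
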